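(* Let $N\in\mathbb{N}$, $h=L/N$, $M>0$. Suppose $\phi_1,\phi_2\in\mathcal{C}_{\rm per}$ satisfy $\langle\phi_1-\phi_2,1\rangle=0$ (i.e. $\phi_1-\phi_2\in\mathring{\mathcal{C}}_{\rm per}$), $\|\phi_1\|_\infty<1$ and $\|\phi_2\|_\infty\le M$. Then $$\|\mathcal{L}^{-1}(\phi_1-\phi_2)\|_\infty\le C_1,$$ where $C_1>0$ depends only upon $M$ and $\Omega$; in particular $C_1$ is independent of the mesh spacing $h$.
   Context: $\Omega=(0,L)^3$, periodic. Grid points $p_i=(i-\tfrac12)h$. $\mathcal{C}_{\rm per}$: real $N$-periodic grid functions on cell centers $(p_i,p_j,p_k)$; $\langle\nu,\xi\rangle=h^3\sum_{i,j,k=1}^N\nu_{i,j,k}\xi_{i,j,k}$; $\mathring{\mathcal{C}}_{\rm per}$: those with $\langle\nu,1\rangle=0$. $\Delta_h$ is the standard 7-point discrete Laplacian $\Delta_h\nu_{i,j,k}=h^{-2}(\nu_{i\pm1,j,k}+\nu_{i,j\pm1,k}+\nu_{i,j,k\pm1}-6\nu_{i,j,k})$ (sum over the six neighbors). $\mathcal{L}=-\Delta_h$, and for $\psi\in\mathring{\mathcal{C}}_{\rm per}$, $\mathcal{L}^{-1}\psi$ denotes the unique $v\in\mathring{\mathcal{C}}_{\rm per}$ with $-\Delta_h v=\psi$. $\|\nu\|_\infty=\max_{i,j,k}|\nu_{i,j,k}|$. *)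

theory Defs
  imports Complex_Main
begin

text \<open>Grid functions on cell centers, indexed by integer triples (i,j,k);
  the cell (i,j,k) has center ((i-1/2)h,(j-1/2)h,(k-1/2)h). N-periodicity is
  imposed explicitly; the fundamental cells are i,j,k in {1..N}.\<close>

type_synonym grid = "int \<Rightarrow> int \<Rightarrow> int \<Rightarrow> real"

definition grid_periodic :: "nat \<Rightarrow> grid \<Rightarrow> bool" where
  "grid_periodic N f \<longleftrightarrow>
     (\<forall>i j k. f (i + int N) j k = f i j k \<and> f i (j + int N) k = f i j k
            \<and> f i j (k + int N) = f i j k)"

definition grid_inner :: "real \<Rightarrow> nat \<Rightarrow> grid \<Rightarrow> grid \<Rightarrow> real" where
  "grid_inner h N f g =
     h ^ 3 * (\<Sum>i\<in>{1..int N}. \<Sum>j\<in>{1..int N}. \<Sum>k\<in>{1..int N}. f i j k * g i j k)"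

definition lap_h :: "real \<Rightarrow> grid \<Rightarrow> grid" where
  "lap_h h f i j k =
     (f (i + 1) j k + f (i - 1) j k + f i (j + 1) k + f i (j - 1) k
      + f i j (k + 1) + f i j (k - 1) - 6 * f i j k) / h ^ 2"

definition Linv :: "real \<Rightarrow> nat \<Rightarrow> grid \<Rightarrow> grid" where
  "Linv h N \<psi> = (THE v. grid_periodic N v \<and> grid_inner h N v (\<lambda>_ _ _. 1) = 0
                         \<and> (\<forall>i j k. - lap_h h v i j k = \<psi> i j k))"

definition grid_sup :: "nat \<Rightarrow> grid \<Rightarrow> real" where
  "grid_sup N f = Max {\<bar>f i j k\<bar> | i j k. i \<in> {1..int N} \<and> j \<in> {1..int N} \<and> k \<in> {1..int N}}"

end

theory Submission
  imports Defs "HOL-Analysis.Analysis"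
begin

definition ee :: "nat \<Rightarrow> int \<Rightarrow> complex" where
  "ee N t = cis (2 * pi * real_of_int t / real N)"

lemma ee_add: "ee N (s + t) = ee N s * ee N t"
  by (simp add: ee_def cis_mult add_divide_distrib ring_distribs)

lemma ee_0[simp]: "ee N 0 = 1"
  by (simp add: ee_def)

lemma ee_mult_N: assumes "N \<ge> 1" shows "ee N (int N * m) = 1"
proof -
  have "2 * pi * real_of_int (int N * m) / real N = 2 * pi * real_of_int m"
    using assms by (simp add: field_simps)
  then show ?thesis by (simp add: ee_def)
qed

lemma ee_neg: "ee N (- t) = cnj (ee N t)"
  by (simp add: ee_def cis_cnj)

lemma norm_ee[simp]: "norm (ee N t) = 1"
  by (simp add: ee_def)

lemma ee_eq_1: assumes "N \<ge> 1" "ee N t = 1" shows "int N dvd t"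
proof -
  have "cos (2 * pi * real_of_int t / real N) = 1"
    using arg_cong[OF assms(2), of Re] by (simp add: ee_def)
  then obtain m :: int where m: "2 * pi * real_of_int t / real N = real_of_int m * 2 * pi"
    using cos_one_2pi_int by blast
  then have "real_of_int t = real_of_int m * real N"
    using assms(1) pi_gt_zero by (simp add: field_simps)
  then have "t = m * int N" by (metis of_int_eq_iff of_int_mult of_int_of_nat_eq)
  then show ?thesis by simp
qed

lemma per_shift1:
  assumes "\<And>t. g (t + int N) = g t"
  shows "(\<Sum>t\<in>{s+1..s+int N}. g (t+1)) = (\<Sum>t\<in>{s+1..s+int N}. g t)"
proof (cases "N = 0")
  case True then show ?thesis by simp
next
  case False
  have inj: "inj_on (\<lambda>t::int. t+1) {s+1..s+int N}" by (simp add: inj_on_def)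
  have img: "(\<lambda>t. t+1) ` {s+1..s+int N} = insert (s+int N+1) {s+2..s+int N}"
    using False by (auto simp: image_iff intro: bexI[where x="_ - 1"])
  have "(\<Sum>t\<in>{s+1..s+int N}. g (t+1)) = (\<Sum>t\<in>insert (s+int N+1) {s+2..s+int N}. g t)"
    using sum.reindex[OF inj, of g] unfolding img by (simp add: o_def)
  also have "(\<Sum>t\<in>insert (s+int N+1) {s+2..s+int N}. g t) = g (s + int N + 1) + (\<Sum>t\<in>{s+2..s+int N}. g t)"
    by simp
  also have "g (s + int N + 1) = g (s + 1)" using assms[of "s+1"] by (simp add: ac_simps)
  also have "{s+1..s+int N} = insert (s+1) {s+2..s+int N}" using False by auto
  ultimately show ?thesis by simp
qed

lemma per_shift_int:
  assumes "\<And>t. g (t + int N) = g t"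
  shows "(\<Sum>t\<in>{s+1..s+int N}. g (t+d)) = (\<Sum>t\<in>{s+1..s+int N}. g t)"
proof (induction d rule: int_induct[where k=0])
  case base then show ?case by simp
next
  case (step1 i)
  have "(\<Sum>t\<in>{s+1..s+int N}. g (t+(i+1))) = (\<Sum>t\<in>{s+1..s+int N}. (\<lambda>t. g (t+i)) (t+1))"
    by (simp add: ac_simps)
  also have "\<dots> = (\<Sum>t\<in>{s+1..s+int N}. g (t+i))"
    by (rule per_shift1) (metis assms add.commute add.left_commute)
  finally show ?case using step1 by simp
next
  case (step2 i)
  have "(\<Sum>t\<in>{s+1..s+int N}. g (t+i)) = (\<Sum>t\<in>{s+1..s+int N}. (\<lambda>t. g (t+(i-1))) (t+1))"
    by (simp add: ac_simps)
  also have "\<dots> = (\<Sum>t\<in>{s+1..s+int N}. g (t+(i-1)))"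
    by (rule per_shift1) (metis assms add.commute add.left_commute)
  finally show ?case using step2 by simp
qed

lemma geo_sum:
  assumes "N \<ge> 1"
  shows "(\<Sum>t\<in>{s+1..s+int N}. ee N (d*t)) = (if int N dvd d then of_nat N else 0)"
proof (cases "int N dvd d")
  case True
  then obtain m where d: "d = int N * m" by auto
  have "ee N (d*t) = 1" for t using ee_mult_N[OF assms, of "m*t"] by (simp add: d ac_simps)
  then show ?thesis using True by simp
next
  case False
  let ?S = "\<Sum>t\<in>{s+1..s+int N}. ee N (d*t)"
  have "?S * ee N d = (\<Sum>t\<in>{s+1..s+int N}. ee N (d*(t+1)))"
    by (simp add: sum_distrib_right ee_add[symmetric] ring_distribs)
  also have "\<dots> = ?S"
    by (rule per_shift1[where g="\<lambda>t. ee N (d*t)"])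
       (simp add: ring_distribs ee_add ee_mult_N[OF assms, of d, simplified mult.commute])
  finally have "?S * (ee N d - 1) = 0" by (simp add: algebra_simps)
  moreover have "ee N d \<noteq> 1" using ee_eq_1[OF assms] False by blast
  ultimately show ?thesis using False by simp
qed

type_synonym pt = "int \<times> int \<times> int"

fun dotp :: "pt \<Rightarrow> pt \<Rightarrow> int" where
  "dotp (a,b,c) (i,j,l) = a*i + b*j + c*l"

fun addp :: "pt \<Rightarrow> pt \<Rightarrow> pt" where
  "addp (i,j,l) (a,b,c) = (i+a, j+b, l+c)"

definition GG :: "nat \<Rightarrow> int set" where "GG N = {0+1..0+int N}"
definition G3 :: "nat \<Rightarrow> pt set" where "G3 N = GG N \<times> GG N \<times> GG N"
definition sA :: "nat \<Rightarrow> int" where "sA N = - ((int N + 1) div 2)"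
definition AA :: "nat \<Rightarrow> int set" where "AA N = {sA N + 1..sA N + int N}"
definition A3 :: "nat \<Rightarrow> pt set" where "A3 N = AA N \<times> AA N \<times> AA N"

definition per3 :: "nat \<Rightarrow> (pt \<Rightarrow> 'a) \<Rightarrow> bool" where
  "per3 N F \<longleftrightarrow> (\<forall>i j l. F (i + int N, j, l) = F (i, j, l) \<and> F (i, j + int N, l) = F (i, j, l)
                       \<and> F (i, j, l + int N) = F (i, j, l))"

lemma finite_G3[simp]: "finite (G3 N)" by (simp add: G3_def GG_def)
lemma finite_A3[simp]: "finite (A3 N)" by (simp add: A3_def AA_def)

lemma sum3: "sum F (X \<times> Y \<times> Z) = (\<Sum>i\<in>X. \<Sum>j\<in>Y. \<Sum>l\<in>Z. F (i, j, l))"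
  by (simp add: sum.cartesian_product)

lemma sum3_prod:
  fixes f g h :: "_ \<Rightarrow> 'a::comm_semiring_0"
  shows "(\<Sum>(a,b,c)\<in>X \<times> Y \<times> Z. f a * g b * h c) = sum f X * sum g Y * sum h Z"
proof -
  have "(\<Sum>(a,b,c)\<in>X \<times> Y \<times> Z. f a * g b * h c) = (\<Sum>i\<in>X. \<Sum>j\<in>Y. (f i * g j) * sum h Z)"
    by (simp add: sum3 sum_distrib_left)
  also have "\<dots> = (\<Sum>i\<in>X. \<Sum>j\<in>Y. f i * g j) * sum h Z"
    by (simp add: sum_distrib_right)
  also have "\<dots> = sum f X * sum g Y * sum h Z" by (simp add: sum_product)
  finally show ?thesis .
qed

lemma shift3:
  assumes "per3 N F"
  shows "(\<Sum>x\<in>G3 N. F (addp x d)) = sum F (G3 N)"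
proof -
  obtain d1 d2 d3 where d: "d = (d1,d2,d3)" by (cases d)
  have p1: "\<And>i j l. F (i + int N, j, l) = F (i, j, l)"
   and p2: "\<And>i j l. F (i, j + int N, l) = F (i, j, l)"
   and p3: "\<And>i j l. F (i, j, l + int N) = F (i, j, l)" using assms by (auto simp: per3_def)
  have "(\<Sum>x\<in>G3 N. F (addp x d)) = (\<Sum>i\<in>GG N. \<Sum>j\<in>GG N. \<Sum>l\<in>GG N. F (i+d1, j+d2, l+d3))"
    by (simp add: G3_def sum3 d)
  also have "\<dots> = (\<Sum>i\<in>GG N. \<Sum>j\<in>GG N. \<Sum>l\<in>GG N. F (i+d1, j+d2, l))"
    unfolding GG_def by (intro sum.cong refl per_shift_int[where g="\<lambda>l. F (_, _, l)"] p3)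
  also have "\<dots> = (\<Sum>i\<in>GG N. \<Sum>j\<in>GG N. \<Sum>l\<in>GG N. F (i+d1, j, l))"
    unfolding GG_def by (intro sum.cong refl per_shift_int[where g="\<lambda>j. \<Sum>l\<in>{0+1..0+int N}. F (_, j, l)"])
      (simp add: p2)
  also have "\<dots> = (\<Sum>i\<in>GG N. \<Sum>j\<in>GG N. \<Sum>l\<in>GG N. F (i, j, l))"
    unfolding GG_def by (intro per_shift_int[where g="\<lambda>i. \<Sum>j\<in>{0+1..0+int N}. \<Sum>l\<in>{0+1..0+int N}. F (i, j, l)"])
      (simp add: p1)
  also have "\<dots> = sum F (G3 N)" by (simp add: G3_def sum3)
  finally show ?thesis .
qed

lemma per1_mult:
  assumes "\<And>t. g (t + int N) = g t"
  shows "g (t + int N * m) = g t"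
proof (induction m rule: int_induct[where k=0])
  case base then show ?case by simp
next
  case (step1 i) then show ?case using assms[of "t + int N * i"] by (simp add: algebra_simps)
next
  case (step2 i) then show ?case using assms[of "t + int N * (i - 1)"] by (simp add: algebra_simps)
qed

definition rd :: "nat \<Rightarrow> int \<Rightarrow> int" where "rd N t = (t - 1) mod int N + 1"

lemma rd_in: assumes "N \<ge> 1" shows "rd N t \<in> GG N"
proof -
  have "0 < int N" using assms by simp
  then have "(t-1) mod int N < int N" "0 \<le> (t-1) mod int N" by simp_all
  then show ?thesis by (simp add: rd_def GG_def)
qed

lemma rd_eq: "rd N t = t + int N * (- ((t - 1) div int N))"
  by (simp add: rd_def algebra_simps minus_div_mult_eq_mod[symmetric])

lemma per3_rd:
  assumes "per3 N F"
  shows "F (i, j, l) = F (rd N i, rd N j, rd N l)"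
proof -
  have p1: "\<And>i j l. F (i + int N, j, l) = F (i, j, l)"
   and p2: "\<And>i j l. F (i, j + int N, l) = F (i, j, l)"
   and p3: "\<And>i j l. F (i, j, l + int N) = F (i, j, l)" using assms by (auto simp: per3_def)
  have "F (rd N i, rd N j, rd N l) = F (i, rd N j, rd N l)"
    unfolding rd_eq[of N i] by (rule per1_mult[where g="\<lambda>i. F (i, _, _)"]) (rule p1)
  also have "\<dots> = F (i, j, rd N l)"
    unfolding rd_eq[of N j] by (rule per1_mult[where g="\<lambda>j. F (_, j, _)"]) (rule p2)
  also have "\<dots> = F (i, j, l)"
    unfolding rd_eq[of N l] by (rule per1_mult[where g="\<lambda>l. F (_, _, l)"]) (rule p3)
  finally show ?thesis by simp
qed

lemma per3_eqI:
  assumes "per3 N F" "per3 N H" "N \<ge> 1" "\<And>x. x \<in> G3 N \<Longrightarrow> F x = H x"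
  shows "F x = H x"
proof -
  obtain i j l where x: "x = (i,j,l)" by (cases x)
  show ?thesis unfolding x per3_rd[OF assms(1), of i j l] per3_rd[OF assms(2), of i j l]
    by (rule assms(4)) (simp add: G3_def rd_in[OF assms(3)])
qed

lemma dvd_GG_eq:
  assumes "t \<in> GG N" "u \<in> GG N" "int N dvd (t - u)"
  shows "t = u"
proof -
  obtain m where m: "t - u = int N * m" using assms(3) by auto
  have "m = 0"
  proof (rule ccontr)
    assume "m \<noteq> 0"
    then consider "m \<ge> 1" | "m \<le> -1" by linarith
    then have "int N * m \<ge> int N \<or> int N * m \<le> - int N"
    proof cases
      case 1 then show ?thesis using mult_left_mono[of 1 m "int N"] by simp
    next
      case 2 then show ?thesis using mult_left_mono[of m "-1" "int N"] by simp
    qed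
    then have "t - u \<ge> int N \<or> t - u \<le> - int N" by (simp only: m)
    then show False using assms(1,2) unfolding GG_def by auto
  qed
  then show ?thesis using m by simp
qed

lemma dvd_AA_eq:
  assumes "a \<in> AA N" "int N dvd a"
  shows "a = 0"
proof -
  obtain m where m: "a = int N * m" using assms(2) by auto
  have b: "- int N < 2 * a" "2 * a \<le> int N" using assms(1) by (auto simp: AA_def sA_def)
  have "m = 0"
  proof (rule ccontr)
    assume "m \<noteq> 0"
    then consider "m \<ge> 1" | "m \<le> -1" by linarith
    then have "int N * m \<ge> int N \<or> int N * m \<le> - int N"
    proof cases
      case 1 then show ?thesis using mult_left_mono[of 1 m "int N"] by simp
    next
      case 2 then show ?thesis using mult_left_mono[of m "-1" "int N"] by simp
    qed
    then show False using b m assms(1) unfolding AA_def sA_def by auto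
  qed
  then show ?thesis using m by simp
qed

lemma orth_A3:
  assumes "N \<ge> 1"
  shows "(\<Sum>k\<in>A3 N. ee N (dotp k (d1,d2,d3))) =
         (if int N dvd d1 \<and> int N dvd d2 \<and> int N dvd d3 then of_nat N ^ 3 else 0)"
proof -
  have "(\<Sum>k\<in>A3 N. ee N (dotp k (d1,d2,d3))) = (\<Sum>(a,b,c)\<in>AA N \<times> AA N \<times> AA N. ee N (d1*a) * ee N (d2*b) * ee N (d3*c))"
    unfolding A3_def by (intro sum.cong refl) (auto simp: ee_add[symmetric] ac_simps)
  also have "\<dots> = (\<Sum>a\<in>AA N. ee N (d1*a)) * (\<Sum>b\<in>AA N. ee N (d2*b)) * (\<Sum>c\<in>AA N. ee N (d3*c))"
    by (rule sum3_prod)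
  also have "\<dots> = (if int N dvd d1 \<and> int N dvd d2 \<and> int N dvd d3 then of_nat N ^ 3 else 0)"
    unfolding AA_def geo_sum[OF assms] by (simp add: power3_eq_cube)
  finally show ?thesis .
qed

lemma orth_G3:
  assumes "N \<ge> 1"
  shows "(\<Sum>x\<in>G3 N. ee N (dotp (a,b,c) x)) =
         (if int N dvd a \<and> int N dvd b \<and> int N dvd c then of_nat N ^ 3 else 0)"
proof -
  have "(\<Sum>x\<in>G3 N. ee N (dotp (a,b,c) x)) = (\<Sum>(i,j,l)\<in>GG N \<times> GG N \<times> GG N. ee N (a*i) * ee N (b*j) * ee N (c*l))"
    unfolding G3_def by (intro sum.cong refl) (auto simp: ee_add[symmetric] ac_simps)
  also have "\<dots> = (\<Sum>i\<in>GG N. ee N (a*i)) * (\<Sum>j\<in>GG N. ee N (b*j)) * (\<Sum>l\<in>GG N. ee N (c*l))"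
    by (rule sum3_prod)
  also have "\<dots> = (if int N dvd a \<and> int N dvd b \<and> int N dvd c then of_nat N ^ 3 else 0)"
    unfolding GG_def geo_sum[OF assms] by (simp add: power3_eq_cube)
  finally show ?thesis .
qed

definition FT :: "nat \<Rightarrow> (pt \<Rightarrow> real) \<Rightarrow> pt \<Rightarrow> complex" where
  "FT N f k = (\<Sum>x\<in>G3 N. of_real (f x) * ee N (- dotp k x))"

lemma dotp_addp: "dotp k (addp x d) = dotp k x + dotp k d"
  by (cases k; cases x; cases d) (simp add: algebra_simps)

lemma ee_per: assumes "N \<ge> 1" shows "ee N (t + int N * m) = ee N t"
  by (simp add: ee_add ee_mult_N[OF assms])

lemma per3_ee: assumes "N \<ge> 1" shows "per3 N (\<lambda>x. ee N (dotp k x))"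
proof -
  obtain a b c where k: "k = (a,b,c)" by (cases k)
  show ?thesis unfolding per3_def k
    using ee_per[OF assms, of "a*_+b*_+c*_" a] ee_per[OF assms, of "a*_+b*_+c*_" b]
      ee_per[OF assms, of "a*_+b*_+c*_" c]
    by (simp add: algebra_simps)
qed

lemma orth_pt:
  assumes "N \<ge> 1" "x \<in> G3 N" "y \<in> G3 N"
  shows "(\<Sum>k\<in>A3 N. ee N (dotp k y - dotp k x)) = (if x = y then of_nat N ^ 3 else 0)"
proof -
  obtain x1 x2 x3 where x: "x = (x1,x2,x3)" by (cases x)
  obtain y1 y2 y3 where y: "y = (y1,y2,y3)" by (cases y)
  have e: "dotp k y - dotp k x = dotp k (y1-x1, y2-x2, y3-x3)" for k
    by (cases k) (simp add: x y algebra_simps)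
  have "(int N dvd (y1-x1) \<and> int N dvd (y2-x2) \<and> int N dvd (y3-x3)) \<longleftrightarrow> x = y"
    using dvd_GG_eq[of y1 N x1] dvd_GG_eq[of y2 N x2] dvd_GG_eq[of y3 N x3] assms(2,3)
    by (auto simp: x y G3_def)
  then show ?thesis unfolding e orth_A3[OF assms(1)] by simp
qed

lemma inversion_G:
  assumes "N \<ge> 1" "y \<in> G3 N"
  shows "(\<Sum>k\<in>A3 N. FT N f k * ee N (dotp k y)) = of_nat N ^ 3 * of_real (f y)"
proof -
  have "(\<Sum>k\<in>A3 N. FT N f k * ee N (dotp k y))
      = (\<Sum>k\<in>A3 N. \<Sum>x\<in>G3 N. of_real (f x) * ee N (dotp k y - dotp k x))"
    unfolding FT_def sum_distrib_right
    by (intro sum.cong refl) (simp add: mult.assoc ee_add[symmetric])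
  also have "\<dots> = (\<Sum>x\<in>G3 N. of_real (f x) * (\<Sum>k\<in>A3 N. ee N (dotp k y - dotp k x)))"
    by (subst sum.swap) (simp add: sum_distrib_left)
  also have "\<dots> = (\<Sum>x\<in>G3 N. of_real (f x) * (if x = y then of_nat N ^ 3 else 0))"
    by (intro sum.cong refl) (simp add: orth_pt[OF assms(1) _ assms(2)])
  also have "\<dots> = of_nat N ^ 3 * of_real (f y)"
    using assms(2) by (simp add: if_distrib cong: if_cong)
  finally show ?thesis .
qed

lemma inversion_all:
  assumes "N \<ge> 1" "per3 N f"
  shows "(\<Sum>k\<in>A3 N. FT N f k * ee N (dotp k y)) = of_nat N ^ 3 * of_real (f y)"
proof (rule per3_eqI[where N=N, OF _ _ assms(1)])
  show "per3 N (\<lambda>y. \<Sum>k\<in>A3 N. FT N f k * ee N (dotp k y))"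
    using per3_ee[OF assms(1)] unfolding per3_def by simp
  show "per3 N (\<lambda>y. of_nat N ^ 3 * (of_real (f y) :: complex))"
    using assms(2) unfolding per3_def by simp
qed (rule inversion_G[OF assms(1)])

lemma parseval:
  assumes "N \<ge> 1"
  shows "(\<Sum>k\<in>A3 N. (cmod (FT N f k))\<^sup>2) = real N ^ 3 * (\<Sum>x\<in>G3 N. (f x)\<^sup>2)"
proof -
  have "(of_real (\<Sum>k\<in>A3 N. (cmod (FT N f k))\<^sup>2) :: complex) = (\<Sum>k\<in>A3 N. FT N f k * cnj (FT N f k))"
    by (simp only: of_real_sum complex_norm_square)
  also have "\<dots> = (\<Sum>k\<in>A3 N. \<Sum>x\<in>G3 N. of_real (f x) * (ee N (- dotp k x) * cnj (FT N f k)))"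
    unfolding FT_def[of N f] sum_distrib_right by (simp add: mult.assoc)
  also have "\<dots> = (\<Sum>x\<in>G3 N. of_real (f x) * cnj (\<Sum>k\<in>A3 N. FT N f k * ee N (dotp k x)))"
    by (subst sum.swap) (simp add: sum_distrib_left ee_neg mult.commute)
  also have "\<dots> = (\<Sum>x\<in>G3 N. of_real (f x) * cnj (of_nat N ^ 3 * of_real (f x)))"
    by (intro sum.cong refl) (simp add: inversion_G[OF assms])
  also have "\<dots> = of_real (real N ^ 3 * (\<Sum>x\<in>G3 N. (f x)\<^sup>2))"
    by (simp add: sum_distrib_left power2_eq_square ac_simps)
  finally show ?thesis by (simp only: of_real_eq_iff)
qed

lemma FT_shift:
  assumes "N \<ge> 1" "per3 N w"
  shows "FT N (\<lambda>x. w (addp x d)) k = ee N (dotp k d) * FT N w k"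
proof -
  define F where "F x = of_real (w x) * ee N (- dotp k x)" for x
  have pF: "per3 N F"
    using assms(2) per3_ee[OF assms(1), of "(- fst k, - fst (snd k), - snd (snd k))"]
    unfolding per3_def F_def by (cases k) simp
  have "FT N (\<lambda>x. w (addp x d)) k = (\<Sum>x\<in>G3 N. ee N (dotp k d) * F (addp x d))"
    unfolding FT_def F_def dotp_addp
    by (intro sum.cong refl) (simp add: ee_add[symmetric])
  also have "\<dots> = ee N (dotp k d) * sum F (G3 N)"
    by (simp add: sum_distrib_left[symmetric] shift3[OF pF])
  finally show ?thesis by (simp add: FT_def F_def)
qed

definition mu :: "nat \<Rightarrow> int \<Rightarrow> real" where
  "mu N a = 4 * (sin (pi * real_of_int a / real N))\<^sup>2"

fun lam :: "real \<Rightarrow> nat \<Rightarrow> pt \<Rightarrow> real" where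
  "lam h N (a,b,c) = (mu N a + mu N b + mu N c) / h\<^sup>2"

fun nsq :: "pt \<Rightarrow> real" where
  "nsq (a,b,c) = real_of_int (a\<^sup>2 + b\<^sup>2 + c\<^sup>2)"

lemma ee_pm: "ee N a + ee N (-a) = 2 - of_real (mu N a)"
proof -
  define w where "w = pi * real_of_int a / real N"
  have th: "2 * pi * real_of_int a / real N = 2 * w" by (simp add: w_def)
  have "ee N a + ee N (-a) = cis (2*w) + cis (-(2*w))" by (simp add: ee_def th)
  also have "\<dots> = of_real (2 * cos (2*w))" by (simp add: complex_eq_iff)
  also have "2 * cos (2*w) = 2 - mu N a" unfolding mu_def w_def[symmetric] cos_double_sin by simp
  then have "(of_real (2 * cos (2*w)) :: complex) = 2 - of_real (mu N a)" by simp
  finally show ?thesis .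
qed

lemma eigen:
  fixes a b c i j l :: int and N :: nat
  defines "E \<equiv> \<lambda>i j l. ee N (dotp (a,b,c) (i,j,l))"
  shows "E (i+1) j l + E (i-1) j l + E i (j+1) l + E i (j-1) l + E i j (l+1) + E i j (l-1) - 6 * E i j l
       = - of_real (mu N a + mu N b + mu N c) * E i j l"
proof -
  have e1: "E (i+1) j l = E i j l * ee N a" "E (i-1) j l = E i j l * ee N (-a)"
       "E i (j+1) l = E i j l * ee N b" "E i (j-1) l = E i j l * ee N (-b)"
       "E i j (l+1) = E i j l * ee N c" "E i j (l-1) = E i j l * ee N (-c)"
    unfolding E_def by (simp_all add: ee_add[symmetric] algebra_simps)
  have "E (i+1) j l + E (i-1) j l + E i (j+1) l + E i (j-1) l + E i j (l+1) + E i j (l-1) - 6 * E i j l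
     = E i j l * ((ee N a + ee N (-a)) + (ee N b + ee N (-b)) + (ee N c + ee N (-c)) - 6)"
    unfolding e1 by (simp add: algebra_simps)
  also have "\<dots> = - of_real (mu N a + mu N b + mu N c) * E i j l"
    unfolding ee_pm by (simp add: algebra_simps)
  finally show ?thesis .
qed

lemma sin_lower: fixes x :: real assumes "0 \<le> x" "x \<le> 2" shows "x / 3 \<le> sin x"
proof -
  have s: "(\<Sum>m<3. sin_coeff m * x ^ m) = x"
    by (simp add: numeral_3_eq_3 sin_coeff_def)
  have "\<bar>sin x - x\<bar> \<le> inverse (fact 3) * \<bar>x\<bar> ^ 3"
    using Maclaurin_sin_bound[of x 3] unfolding s .
  then have h: "\<bar>sin x - x\<bar> \<le> x ^ 3 / 6" using assms by (simp add: fact_numeral)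
  then have "x - sin x \<le> x ^ 3 / 6" using abs_ge_self[of "x - sin x"] abs_minus_commute[of "sin x" x] by linarith
  moreover have "x ^ 3 \<le> 4 * x"
  proof -
    have "x^2 \<le> 2^2" using assms by (intro power_mono) auto
    then have "x * x^2 \<le> x * 4" using assms by (intro mult_left_mono) auto
    then show ?thesis by (simp add: power3_eq_cube power2_eq_square ac_simps)
  qed
  ultimately show ?thesis by linarith
qed

lemma sin_sq_lower: fixes x :: real assumes "\<bar>x\<bar> \<le> 2" shows "x\<^sup>2 / 9 \<le> (sin x)\<^sup>2"
proof -
  have "\<bar>x\<bar> / 3 \<le> \<bar>sin x\<bar>"
  proof (cases "x \<ge> 0")
    case True then show ?thesis using sin_lower[of x] assms by auto
  next
    case False then show ?thesis using sin_lower[of "-x"] assms by auto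
  qed
  then have "(\<bar>x\<bar> / 3)\<^sup>2 \<le> \<bar>sin x\<bar>\<^sup>2" by (intro power_mono) auto
  then show ?thesis by (simp add: power_divide)
qed

lemma AA_bound: "a \<in> AA N \<Longrightarrow> 2 * \<bar>a\<bar> \<le> int N"
  by (auto simp: AA_def sA_def)

lemma mu_lower:
  assumes "N \<ge> 1" "a \<in> AA N"
  shows "4 * (real_of_int a)\<^sup>2 / (real N)\<^sup>2 \<le> mu N a"
proof -
  define x where "x = pi * real_of_int a / real N"
  have Npos: "real N > 0" using assms(1) by simp
  have "2 * \<bar>real_of_int a\<bar> \<le> real N" using AA_bound[OF assms(2)] by linarith
  then have ax: "\<bar>real_of_int a\<bar> / real N \<le> 1/2" using Npos by (simp add: field_simps)
  have "\<bar>x\<bar> = pi * (\<bar>real_of_int a\<bar> / real N)" using Npos by (simp add: x_def abs_mult)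
  also have "\<dots> \<le> pi * (1/2)" using ax by (intro mult_left_mono) auto
  also have "\<dots> \<le> 2" using pi_less_4 by simp
  finally have "x\<^sup>2 / 9 \<le> (sin x)\<^sup>2" by (rule sin_sq_lower)
  moreover have "(real_of_int a)\<^sup>2 / (real N)\<^sup>2 \<le> x\<^sup>2 / 9"
  proof -
    define q where "q = (real_of_int a)\<^sup>2 / (real N)\<^sup>2"
    have q0: "0 \<le> q" by (simp add: q_def)
    have x2: "x\<^sup>2 = pi\<^sup>2 * q" by (simp add: x_def q_def power_divide power_mult_distrib)
    have "3*3 \<le> pi*pi" using pi_gt3 by (intro mult_mono) auto
    then have "9 \<le> pi\<^sup>2" by (simp add: power2_eq_square)
    then have "9 * q \<le> pi\<^sup>2 * q" using q0 by (intro mult_right_mono) auto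
    then show ?thesis unfolding x2 q_def[symmetric] by simp
  qed
  ultimately have "(real_of_int a)\<^sup>2 / (real N)\<^sup>2 \<le> (sin x)\<^sup>2" by linarith
  then show ?thesis by (simp add: mu_def x_def[symmetric])
qed

lemma lam_lower:
  assumes "N \<ge> 1" "L > 0" "k \<in> A3 N"
  shows "4 * nsq k / L\<^sup>2 \<le> lam (L / real N) N k"
proof -
  obtain a b c where k: "k = (a,b,c)" by (cases k)
  have abc: "a \<in> AA N" "b \<in> AA N" "c \<in> AA N" using assms(3) by (auto simp: A3_def k)
  have Npos: "real N > 0" using assms(1) by simp
  have "4 * nsq k / (real N)\<^sup>2 \<le> mu N a + mu N b + mu N c"
    using mu_lower[OF assms(1) abc(1)] mu_lower[OF assms(1) abc(2)] mu_lower[OF assms(1) abc(3)]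
    by (simp add: k add_divide_distrib ring_distribs)
  then have le: "4 * nsq k / (real N)\<^sup>2 / (L / real N)\<^sup>2 \<le> (mu N a + mu N b + mu N c) / (L / real N)\<^sup>2"
    using assms(2) Npos by (intro divide_right_mono) auto
  have d: "(real N)\<^sup>2 * (L / real N)\<^sup>2 = L\<^sup>2" using Npos by (simp add: power_divide)
  have eq: "4 * nsq k / (real N)\<^sup>2 / (L / real N)\<^sup>2 = 4 * nsq k / L\<^sup>2"
    by (simp only: divide_divide_eq_left d)
  have "lam (L / real N) N k = (mu N a + mu N b + mu N c) / (L / real N)\<^sup>2" by (simp add: k)
  then show ?thesis using le eq by linarith
qed

lemma nsq_ge1: "k \<noteq> (0,0,0) \<Longrightarrow> 1 \<le> nsq k"
proof -
  assume "k \<noteq> (0,0,0)"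
  obtain a b c where k: "k = (a,b,c)" by (cases k)
  have "a \<noteq> 0 \<or> b \<noteq> 0 \<or> c \<noteq> 0" using \<open>k \<noteq> (0,0,0)\<close> k by auto
  then have "1 \<le> a\<^sup>2 + b\<^sup>2 + c\<^sup>2"
    by (smt (verit) zero_le_power2 power2_less_eq_zero_iff int_one_le_iff_zero_less zero_less_power2)
  then have "(1::real) \<le> real_of_int (a\<^sup>2 + b\<^sup>2 + c\<^sup>2)" by (metis of_int_1 of_int_le_iff)
  then show ?thesis by (simp only: k nsq.simps)
qed

definition CC :: "nat \<Rightarrow> pt set" where
  "CC r = {-int r..int r} \<times> {-int r..int r} \<times> {-int r..int r}"

lemma finite_CC[simp]: "finite (CC r)" by (simp add: CC_def)

lemma card_CC: "card (CC r) = (2*r+1)^3"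
proof -
  have "card {-int r..int r} = 2*r+1" by simp
  then show ?thesis by (simp add: CC_def card_cartesian_product power3_eq_cube)
qed

lemma CC_mono: "CC r \<subseteq> CC (Suc r)" by (auto simp: CC_def)

lemma shell_nsq:
  assumes "m \<in> CC (Suc r) - CC r"
  shows "(real r + 1)\<^sup>2 \<le> nsq m"
proof -
  obtain a b c where m: "m = (a,b,c)" by (cases m)
  have "\<bar>a\<bar> \<ge> int r + 1 \<or> \<bar>b\<bar> \<ge> int r + 1 \<or> \<bar>c\<bar> \<ge> int r + 1"
    using assms by (auto simp: CC_def m)
  then have "(int r + 1)\<^sup>2 \<le> a\<^sup>2 \<or> (int r + 1)\<^sup>2 \<le> b\<^sup>2 \<or> (int r + 1)\<^sup>2 \<le> c\<^sup>2"
    by (metis abs_le_square_iff abs_of_nonneg of_nat_0_le_iff add_nonneg_nonneg zero_le_one)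
  then have "(int r + 1)\<^sup>2 \<le> a\<^sup>2 + b\<^sup>2 + c\<^sup>2"
    using zero_le_power2[of a] zero_le_power2[of b] zero_le_power2[of c] by linarith
  then have "real_of_int ((int r + 1)\<^sup>2) \<le> real_of_int (a\<^sup>2 + b\<^sup>2 + c\<^sup>2)"
    by (simp only: of_int_le_iff)
  then show ?thesis by (simp only: m nsq.simps) simp
qed

lemma cube_sum: "(\<Sum>m\<in>CC r - {(0,0,0)}. 1 / (nsq m)\<^sup>2) \<le> 52 - 52 / (real r + 1)"
proof (induction r)
  case 0
  have e: "CC 0 - {(0,0,0)} = {}" by (auto simp: CC_def)
  show ?case unfolding e by simp
next
  case (Suc r)
  let ?f = "\<lambda>m. 1 / (nsq m)\<^sup>2"
  let ?S = "CC (Suc r) - CC r"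
  have z: "(0,0,0) \<in> CC r" by (simp add: CC_def)
  have split: "CC (Suc r) - {(0,0,0)} = (CC r - {(0,0,0)}) \<union> ?S" using CC_mono[of r] z by auto
  have "sum ?f (CC (Suc r) - {(0,0,0)}) = sum ?f (CC r - {(0,0,0)}) + sum ?f ?S"
    unfolding split by (rule sum.union_disjoint) auto
  moreover have "sum ?f ?S \<le> 26 / (real r + 1)\<^sup>2"
  proof -
    have q: "0 < real r + 1" by simp
    have b: "?f m \<le> 1 / ((real r + 1)\<^sup>2)\<^sup>2" if "m \<in> ?S" for m
    proof -
      have "(real r + 1)\<^sup>2 \<le> nsq m" by (rule shell_nsq[OF that])
      then have "((real r + 1)\<^sup>2)\<^sup>2 \<le> (nsq m)\<^sup>2" by (intro power_mono) auto
      moreover have "0 < ((real r + 1)\<^sup>2)\<^sup>2" using q by simp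
      ultimately have "0 < (nsq m)\<^sup>2" by linarith
      show ?thesis using \<open>((real r + 1)\<^sup>2)\<^sup>2 \<le> (nsq m)\<^sup>2\<close> \<open>0 < ((real r + 1)\<^sup>2)\<^sup>2\<close> \<open>0 < (nsq m)\<^sup>2\<close>
        by (intro divide_left_mono) auto
    qed
    have "sum ?f ?S \<le> of_nat (card ?S) * (1 / ((real r + 1)\<^sup>2)\<^sup>2)"
      by (rule sum_bounded_above) (rule b)
    moreover have "card ?S \<le> 26 * (r+1)^2"
    proof -
      have "card ?S = (2*(Suc r)+1)^3 - (2*r+1)^3"
        using CC_mono[of r] by (simp add: card_Diff_subset card_CC)
      moreover have "(2*(Suc r)+1)^3 \<le> (2*r+1)^3 + 26 * (r+1)^2"
        by (simp add: power3_eq_cube power2_eq_square algebra_simps)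
      ultimately show ?thesis by linarith
    qed
    then have "real (card ?S) \<le> 26 * (real r + 1)\<^sup>2"
      by (metis (mono_tags, lifting) of_nat_1 of_nat_add of_nat_le_iff of_nat_mult of_nat_numeral of_nat_power)
    ultimately have "sum ?f ?S \<le> 26 * (real r + 1)\<^sup>2 * (1 / ((real r + 1)\<^sup>2)\<^sup>2)"
      by (smt (verit) mult_right_mono zero_le_divide_1_iff zero_le_power2)
    also have "\<dots> = 26 / (real r + 1)\<^sup>2"
    proof -
      define x where "x = (real r + 1)\<^sup>2"
      have "0 < x" using q by (simp add: x_def)
      then have "26 * x * (1 / x\<^sup>2) = 26 / x" by (simp add: power2_eq_square)
      then show ?thesis by (simp only: x_def)
    qed
    finally show ?thesis .
  qed
  moreover have "52 - 52 / (real r + 1) + 26 / (real r + 1)\<^sup>2 \<le> 52 - 52 / (real (Suc r) + 1)"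
  proof -
    define q where "q = real r + 1"
    have q: "q \<ge> 1" by (simp add: q_def)
    have "26 / q\<^sup>2 \<le> 52 / q - 52 / (q + 1)"
    proof -
      have "52 / q - 52 / (q + 1) = 52 / (q * (q+1))" using q by (simp add: field_simps)
      moreover have "26 / q\<^sup>2 \<le> 52 / (q * (q+1))"
        using q by (simp add: power2_eq_square divide_simps)
      ultimately show ?thesis by simp
    qed
    then show ?thesis by (simp add: q_def algebra_simps)
  qed
  ultimately show ?case using Suc.IH by linarith
qed

lemma A3_CC: "A3 N \<subseteq> CC N"
  using AA_bound by (fastforce simp: A3_def CC_def abs_le_iff)

lemma A3_sum: "(\<Sum>m\<in>A3 N - {(0,0,0)}. 1 / (nsq m)\<^sup>2) \<le> 52"
proof -
  have "(\<Sum>m\<in>A3 N - {(0,0,0)}. 1 / (nsq m)\<^sup>2) \<le> (\<Sum>m\<in>CC N - {(0,0,0)}. 1 / (nsq m)\<^sup>2)"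
    using A3_CC by (intro sum_mono2) auto
  also have "\<dots> \<le> 52 - 52 / (real N + 1)" by (rule cube_sum)
  also have "\<dots> \<le> 52" by simp
  finally show ?thesis .
qed

definition unc :: "grid \<Rightarrow> pt \<Rightarrow> real" where "unc g = (\<lambda>(i,j,l). g i j l)"

lemma unc_apply[simp]: "unc g (i,j,l) = g i j l" by (simp add: unc_def)

lemma per3_unc: "grid_periodic N g \<Longrightarrow> per3 N (unc g)"
  by (simp add: grid_periodic_def per3_def)

definition KK :: "nat \<Rightarrow> pt set" where "KK N = A3 N - {(0,0,0)}"

lemma finite_KK[simp]: "finite (KK N)" by (simp add: KK_def)

lemma lam_pos:
  assumes "N \<ge> 1" "L > 0" "k \<in> KK N"
  shows "0 < lam (L / real N) N k"
proof -
  have "k \<in> A3 N" "k \<noteq> (0,0,0)" using assms(3) by (auto simp: KK_def)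
  then have "4 * nsq k / L\<^sup>2 \<le> lam (L / real N) N k" "1 \<le> nsq k"
    using lam_lower[OF assms(1,2)] nsq_ge1 by auto
  moreover have "0 < 4 * nsq k / L\<^sup>2" using assms(2) \<open>1 \<le> nsq k\<close> by simp
  ultimately show ?thesis by linarith
qed

lemma lam_h2: "h \<noteq> 0 \<Longrightarrow> h\<^sup>2 * lam h N k = mu N (fst k) + mu N (fst (snd k)) + mu N (snd (snd k))"
  by (cases k) simp

lemma eigen':
  fixes k :: pt and N :: nat and h :: real
  assumes "h \<noteq> 0"
  defines "E \<equiv> \<lambda>i j l. ee N (dotp k (i,j,l))"
  shows "E (i+1) j l + E (i-1) j l + E i (j+1) l + E i (j-1) l + E i j (l+1) + E i j (l-1) - 6 * E i j l
       = - of_real (h\<^sup>2 * lam h N k) * E i j l"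
proof -
  obtain a b c where k: "k = (a,b,c)" by (cases k)
  show ?thesis unfolding E_def lam_h2[OF assms(1)] unfolding k using eigen[of N a b c i j l] by simp
qed

definition solV :: "real \<Rightarrow> nat \<Rightarrow> (pt \<Rightarrow> real) \<Rightarrow> pt \<Rightarrow> complex" where
  "solV h N F x = (\<Sum>k\<in>KK N. (FT N F k / of_real (lam h N k)) * ee N (dotp k x)) / of_nat N ^ 3"

definition sol :: "real \<Rightarrow> nat \<Rightarrow> grid \<Rightarrow> grid" where
  "sol h N f i j l = Re (solV h N (unc f) (i,j,l))"

lemma sol_periodic:
  assumes "N \<ge> 1"
  shows "grid_periodic N (sol h N f)"
  using per3_ee[OF assms] unfolding grid_periodic_def sol_def solV_def per3_def by simp

lemma dotp_0[simp]: "dotp (0,0,0) x = 0" by (cases x) simp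

lemma FT_zero_mean:
  "FT N F (0,0,0) = of_real (sum F (G3 N))"
  by (simp add: FT_def)

lemma KK_eq: assumes "N \<ge> 1" shows "A3 N = insert (0,0,0) (KK N)" "(0,0,0) \<notin> KK N"
proof -
  have "(0::int) \<in> AA N" using assms by (auto simp: AA_def sA_def)
  then show "A3 N = insert (0,0,0) (KK N)" by (auto simp: KK_def A3_def)
qed (simp add: KK_def)

lemma sum_KK_split: "N \<ge> 1 \<Longrightarrow> sum g (A3 N) = g (0,0,0) + sum g (KK N)"
  by (subst KK_eq(1)) (simp_all add: KK_eq(2))

lemma sol_lap:
  assumes "N \<ge> 1" "L > 0" "grid_periodic N f" "sum (unc f) (G3 N) = 0"
  shows "- lap_h (L / real N) (sol (L / real N) N f) i j l = f i j l"
proof -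
  define h where "h = L / real N"
  have h0: "h \<noteq> 0" using assms(1,2) by (simp add: h_def)
  define E where "E k i j l = ee N (dotp k (i,j,l))" for k i j l
  define c where "c k = FT N (unc f) k / of_real (lam h N k)" for k
  define S where "S i j l = (\<Sum>k\<in>KK N. c k * E k i j l)" for i j l
  have sV: "solV h N (unc f) (i,j,l) = S i j l / of_nat N ^ 3" for i j l
    by (simp add: solV_def S_def c_def E_def)
  have "S (i+1) j l + S (i-1) j l + S i (j+1) l + S i (j-1) l + S i j (l+1) + S i j (l-1) - 6 * S i j l
      = (\<Sum>k\<in>KK N. c k * (E k (i+1) j l + E k (i-1) j l + E k i (j+1) l + E k i (j-1) l
           + E k i j (l+1) + E k i j (l-1) - 6 * E k i j l))"
    by (simp add: S_def sum.distrib sum_subtractf sum_distrib_left distrib_left right_diff_distrib mult.left_commute)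
  also have "\<dots> = (\<Sum>k\<in>KK N. - of_real (h\<^sup>2) * (FT N (unc f) k * E k i j l))"
  proof (intro sum.cong refl)
    fix k assume k: "k \<in> KK N"
    have lp: "lam h N k \<noteq> 0" using lam_pos[OF assms(1,2) k] by (simp add: h_def)
    have "c k * (E k (i+1) j l + E k (i-1) j l + E k i (j+1) l + E k i (j-1) l
           + E k i j (l+1) + E k i j (l-1) - 6 * E k i j l) = c k * (- of_real (h\<^sup>2 * lam h N k) * E k i j l)"
      using eigen'[OF h0, of N k i j l] by (simp add: E_def)
    also have "\<dots> = - of_real (h\<^sup>2) * (FT N (unc f) k * E k i j l)"
      using lp by (simp add: c_def field_simps)
    finally show "c k * (E k (i+1) j l + E k (i-1) j l + E k i (j+1) l + E k i (j-1) l
           + E k i j (l+1) + E k i j (l-1) - 6 * E k i j l) = - of_real (h\<^sup>2) * (FT N (unc f) k * E k i j l)" .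
  qed
  also have "\<dots> = - of_real (h\<^sup>2) * (\<Sum>k\<in>KK N. FT N (unc f) k * E k i j l)"
    by (simp add: sum_distrib_left)
  also have "(\<Sum>k\<in>KK N. FT N (unc f) k * E k i j l) = of_nat N ^ 3 * of_real (f i j l)"
  proof -
    have "(\<Sum>k\<in>A3 N. FT N (unc f) k * E k i j l) = of_nat N ^ 3 * of_real (unc f (i,j,l))"
      unfolding E_def by (rule inversion_all[OF assms(1) per3_unc[OF assms(3)]])
    then show ?thesis unfolding sum_KK_split[OF assms(1)] by (simp add: FT_zero_mean assms(4) E_def)
  qed
  finally have S6: "S (i+1) j l + S (i-1) j l + S i (j+1) l + S i (j-1) l + S i j (l+1) + S i j (l-1) - 6 * S i j l
     = - of_real (h\<^sup>2) * (of_nat N ^ 3 * of_real (f i j l))" .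
  have "lap_h h (sol h N f) i j l
     = Re ((S (i+1) j l + S (i-1) j l + S i (j+1) l + S i (j-1) l + S i j (l+1) + S i j (l-1) - 6 * S i j l)
          / of_nat N ^ 3) / h\<^sup>2"
    unfolding lap_h_def sol_def sV by (simp add: diff_divide_distrib add_divide_distrib)
  also have "\<dots> = - f i j l"
    unfolding S6 using h0 assms(1) by simp
  finally show ?thesis by (simp add: h_def)
qed

lemma unc_sol: "unc (sol h N f) x = Re (solV h N (unc f) x)"
  by (cases x) (simp add: sol_def)

lemma orth_KK:
  assumes "N \<ge> 1" "k \<in> KK N"
  shows "(\<Sum>x\<in>G3 N. ee N (dotp k x)) = 0"
proof -
  obtain a b c where k: "k = (a,b,c)" by (cases k)
  have abc: "a \<in> AA N" "b \<in> AA N" "c \<in> AA N" "\<not> (a = 0 \<and> b = 0 \<and> c = 0)"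
    using assms(2) by (auto simp: KK_def A3_def k)
  then have "\<not> (int N dvd a \<and> int N dvd b \<and> int N dvd c)" using dvd_AA_eq by blast
  then show ?thesis unfolding k orth_G3[OF assms(1)] by auto
qed

lemma sol_mean:
  assumes "N \<ge> 1"
  shows "sum (unc (sol h N f)) (G3 N) = 0"
proof -
  have "(\<Sum>x\<in>G3 N. solV h N (unc f) x)
     = (\<Sum>k\<in>KK N. (FT N (unc f) k / of_real (lam h N k)) * (\<Sum>x\<in>G3 N. ee N (dotp k x))) / of_nat N ^ 3"
    unfolding solV_def sum_divide_distrib[symmetric] sum_distrib_left by (subst sum.swap) simp
  also have "\<dots> = 0" by (simp add: orth_KK[OF assms])
  finally show ?thesis unfolding unc_sol Re_sum[symmetric] by simp
qed

lemma grid_inner_one: "grid_inner h N g (\<lambda>_ _ _. 1) = h ^ 3 * sum (unc g) (G3 N)"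
  by (simp add: grid_inner_def G3_def GG_def sum3)

lemma card_G3: "card (G3 N) = N ^ 3"
  by (simp add: G3_def GG_def card_cartesian_product power3_eq_cube)

lemma sol_bound:
  assumes "N \<ge> 1" "L > 0" "\<And>x. x \<in> G3 N \<Longrightarrow> \<bar>unc f x\<bar> \<le> B" "0 \<le> B"
  shows "\<bar>sol (L / real N) N f i j l\<bar> \<le> 2 * L\<^sup>2 * B"
proof -
  define h where "h = L / real N"
  define T where "T = (\<Sum>k\<in>KK N. cmod (FT N (unc f) k) * (1 / lam h N k))"
  define P where "P = (\<Sum>k\<in>KK N. (cmod (FT N (unc f) k))\<^sup>2)"
  define Q where "Q = (\<Sum>k\<in>KK N. (1 / lam h N k)\<^sup>2)"
  have Npos: "0 < real N" using assms(1) by simp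
  have lp: "\<And>k. k \<in> KK N \<Longrightarrow> 0 < lam h N k" unfolding h_def by (rule lam_pos[OF assms(1,2)])
  have "\<bar>sol h N f i j l\<bar> \<le> cmod (solV h N (unc f) (i,j,l))"
    unfolding sol_def by (rule abs_Re_le_cmod)
  also have "\<dots> = cmod (\<Sum>k\<in>KK N. (FT N (unc f) k / of_real (lam h N k)) * ee N (dotp k (i,j,l))) / real N ^ 3"
    unfolding solV_def by (simp add: norm_divide norm_power)
  also have "\<dots> \<le> T / real N ^ 3"
  proof (intro divide_right_mono)
    show "cmod (\<Sum>k\<in>KK N. (FT N (unc f) k / of_real (lam h N k)) * ee N (dotp k (i,j,l))) \<le> T"
      unfolding T_def
      by (rule order_trans[OF norm_sum], rule sum_mono, simp add: norm_mult norm_divide abs_of_pos[OF lp])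
  qed simp
  also have "T \<le> real N ^ 3 * (2 * L\<^sup>2 * B)"
  proof -
    have CS: "T\<^sup>2 \<le> P * Q" unfolding T_def P_def Q_def by (rule Cauchy_Schwarz_ineq_sum)
    have "P \<le> (\<Sum>k\<in>A3 N. (cmod (FT N (unc f) k))\<^sup>2)"
      unfolding P_def KK_def by (intro sum_mono2) auto
    also have "\<dots> = real N ^ 3 * (\<Sum>x\<in>G3 N. (unc f x)\<^sup>2)" by (rule parseval[OF assms(1)])
    also have "(\<Sum>x\<in>G3 N. (unc f x)\<^sup>2) \<le> real N ^ 3 * B\<^sup>2"
    proof -
      have "(\<Sum>x\<in>G3 N. (unc f x)\<^sup>2) \<le> of_nat (card (G3 N)) * B\<^sup>2"
      proof (rule sum_bounded_above)
        fix x assume "x \<in> G3 N"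
        then have "\<bar>unc f x\<bar>\<^sup>2 \<le> B\<^sup>2" using assms(3) by (intro power_mono) auto
        then show "(unc f x)\<^sup>2 \<le> B\<^sup>2" by simp
      qed
      then show ?thesis by (simp add: card_G3)
    qed
    finally have Pb: "P \<le> real N ^ 3 * (real N ^ 3 * B\<^sup>2)" using Npos by (simp add: mult_left_mono)
    have "Q \<le> (\<Sum>k\<in>KK N. (L\<^sup>2 / 4)\<^sup>2 * (1 / (nsq k)\<^sup>2))"
      unfolding Q_def
    proof (intro sum_mono)
      fix k assume k: "k \<in> KK N"
      have n1: "1 \<le> nsq k" using k nsq_ge1 by (auto simp: KK_def)
      have "4 * nsq k / L\<^sup>2 \<le> lam h N k" unfolding h_def
        using lam_lower[OF assms(1,2)] k by (auto simp: KK_def)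
      moreover have "0 < 4 * nsq k / L\<^sup>2" using n1 assms(2) by simp
      ultimately have "1 / lam h N k \<le> 1 / (4 * nsq k / L\<^sup>2)"
        using lp[OF k] by (metis divide_left_mono mult_pos_pos zero_le_one)
      also have "\<dots> = L\<^sup>2 / 4 * (1 / nsq k)" using n1 by simp
      finally have "(1 / lam h N k)\<^sup>2 \<le> (L\<^sup>2 / 4 * (1 / nsq k))\<^sup>2"
        using lp[OF k] by (intro power_mono) auto
      then show "(1 / lam h N k)\<^sup>2 \<le> (L\<^sup>2 / 4)\<^sup>2 * (1 / (nsq k)\<^sup>2)"
        by (simp add: power_mult_distrib power_divide)
    qed
    also have "\<dots> = (L\<^sup>2 / 4)\<^sup>2 * (\<Sum>k\<in>KK N. 1 / (nsq k)\<^sup>2)" by (simp add: sum_distrib_left)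
    also have "\<dots> \<le> (L\<^sup>2 / 4)\<^sup>2 * 52"
      using A3_sum[of N] unfolding KK_def by (intro mult_left_mono) auto
    also have "\<dots> \<le> 4 * (L\<^sup>2)\<^sup>2" by (simp add: power_divide)
    finally have Qb: "Q \<le> 4 * (L\<^sup>2)\<^sup>2" .
    have P0: "0 \<le> P" unfolding P_def by (intro sum_nonneg) auto
    have Q0: "0 \<le> Q" unfolding Q_def by (intro sum_nonneg) auto
    have "P * Q \<le> (real N ^ 3 * (real N ^ 3 * B\<^sup>2)) * (4 * (L\<^sup>2)\<^sup>2)"
      using Pb Qb P0 Q0 by (intro mult_mono) auto
    also have "\<dots> = (real N ^ 3 * (2 * L\<^sup>2 * B))\<^sup>2" by algebra
    finally have "T\<^sup>2 \<le> (real N ^ 3 * (2 * L\<^sup>2 * B))\<^sup>2" using CS by linarith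
    moreover have "0 \<le> real N ^ 3 * (2 * L\<^sup>2 * B)" using assms(4) by simp
    ultimately show ?thesis by (rule power2_le_imp_le)
  qed
  then have "T \<le> (2 * L\<^sup>2 * B) * real N ^ 3" by (simp only: mult.commute)
  then have "T / real N ^ 3 \<le> 2 * L\<^sup>2 * B" using Npos by (simp add: pos_divide_le_eq)
  finally show ?thesis by (simp add: h_def)
qed

lemma FT_add: "FT N (\<lambda>x. A x + B x) k = FT N A k + FT N B k"
  by (simp add: FT_def sum.distrib distrib_right)
lemma FT_diff: "FT N (\<lambda>x. A x - B x) k = FT N A k - FT N B k"
  by (simp add: FT_def sum_subtractf left_diff_distrib)
lemma FT_cmult: "FT N (\<lambda>x. c * A x) k = of_real c * FT N A k"
  by (simp add: FT_def sum_distrib_left mult.assoc)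
lemma FT_div: "FT N (\<lambda>x. A x / c) k = FT N A k / of_real c"
  by (simp add: FT_def sum_divide_distrib)
lemma FT_0: "FT N (\<lambda>x. 0) k = 0"
  by (simp add: FT_def)

lemma FT_lap:
  assumes "N \<ge> 1" "h \<noteq> 0" "grid_periodic N w"
  shows "FT N (unc (lap_h h w)) k = - of_real (lam h N k) * FT N (unc w) k"
proof -
  define W where "W = unc w"
  have pW: "per3 N W" unfolding W_def by (rule per3_unc[OF assms(3)])
  have e: "unc (lap_h h w) = (\<lambda>x. (W (addp x (1,0,0)) + W (addp x (-1,0,0)) + W (addp x (0,1,0))
       + W (addp x (0,-1,0)) + W (addp x (0,0,1)) + W (addp x (0,0,-1)) - 6 * W x) / h\<^sup>2)"
    by (rule ext, case_tac x) (simp add: W_def lap_h_def)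
  obtain a b c where k: "k = (a,b,c)" by (cases k)
  have "FT N (unc (lap_h h w)) k = (FT N W k * ((ee N a + ee N (-a)) + (ee N b + ee N (-b)) + (ee N c + ee N (-c)) - 6)) / of_real (h\<^sup>2)"
    unfolding e FT_div FT_diff FT_add FT_cmult FT_shift[OF assms(1) pW] by (simp add: k algebra_simps)
  also have "\<dots> = - of_real (lam h N k) * FT N W k"
    unfolding ee_pm using assms(2) by (simp add: k field_simps)
  finally show ?thesis by (simp add: W_def)
qed

lemma uniq:
  assumes "N \<ge> 1" "L > 0" "grid_periodic N w" "sum (unc w) (G3 N) = 0"
    "\<And>i j l. lap_h (L / real N) w i j l = 0"
  shows "w i j l = 0"
proof -
  define h where "h = L / real N"
  have h0: "h \<noteq> 0" using assms(1,2) by (simp add: h_def)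
  have lap0: "unc (lap_h h w) = (\<lambda>x. 0)" using assms(5) by (auto simp: h_def unc_def)
  have FTk: "FT N (unc w) k = 0" if "k \<in> KK N" for k
  proof -
    have "- of_real (lam h N k) * FT N (unc w) k = 0"
      using FT_lap[OF assms(1) h0 assms(3), of k] unfolding lap0 FT_0 by simp
    moreover have "lam h N k \<noteq> 0" using lam_pos[OF assms(1,2) that] by (simp add: h_def)
    ultimately show ?thesis by simp
  qed
  have FT0: "FT N (unc w) (0,0,0) = 0" by (simp add: FT_zero_mean assms(4))
  have "unc w x = (\<lambda>_. 0) x" for x
  proof (rule per3_eqI[OF per3_unc[OF assms(3)] _ assms(1)])
    show "per3 N (\<lambda>_. 0::real)" by (simp add: per3_def)
  next
    fix y assume y: "y \<in> G3 N"
    have "of_nat N ^ 3 * (of_real (unc w y) :: complex) = (\<Sum>k\<in>A3 N. FT N (unc w) k * ee N (dotp k y))"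
      by (rule inversion_G[OF assms(1) y, symmetric])
    also have "\<dots> = 0" unfolding sum_KK_split[OF assms(1)] by (simp add: FT0 FTk)
    finally show "unc w y = 0" using assms(1) by simp
  qed
  from this[of "(i,j,l)"] show ?thesis by simp
qed

lemma lap_diff: "lap_h h (\<lambda>i j l. v i j l - s i j l) i j l = lap_h h v i j l - lap_h h s i j l"
  by (simp add: lap_h_def diff_divide_distrib[symmetric] algebra_simps)

lemma Linv_eq:
  assumes "N \<ge> 1" "L > 0" "grid_periodic N f" "sum (unc f) (G3 N) = 0"
  shows "Linv (L / real N) N f = sol (L / real N) N f"
  unfolding Linv_def
proof (rule the_equality)
  let ?h = "L / real N"
  show "grid_periodic N (sol ?h N f) \<and> grid_inner ?h N (sol ?h N f) (\<lambda>_ _ _. 1) = 0 \<and>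
        (\<forall>i j k. - lap_h ?h (sol ?h N f) i j k = f i j k)"
    using sol_periodic[OF assms(1)] sol_mean[OF assms(1)] sol_lap[OF assms] by (simp add: grid_inner_one)
next
  let ?h = "L / real N"
  fix v assume v: "grid_periodic N v \<and> grid_inner ?h N v (\<lambda>_ _ _. 1) = 0 \<and> (\<forall>i j k. - lap_h ?h v i j k = f i j k)"
  define w where "w i j l = v i j l - sol ?h N f i j l" for i j l
  have hpos: "?h ^ 3 \<noteq> 0" using assms(1,2) by simp
  have pw: "grid_periodic N w" using v sol_periodic[OF assms(1), of ?h f]
    by (simp add: grid_periodic_def w_def)
  have sv: "sum (unc v) (G3 N) = 0" using v hpos by (simp add: grid_inner_one)
  have sw: "sum (unc w) (G3 N) = 0"
  proof -
    have "unc w = (\<lambda>x. unc v x - unc (sol ?h N f) x)" by (auto simp: unc_def w_def)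
    then show ?thesis using sv sol_mean[OF assms(1), of ?h f] by (simp add: sum_subtractf)
  qed
  have lw: "lap_h ?h w i j l = 0" for i j l
    using v sol_lap[OF assms, of i j l] unfolding w_def lap_diff by (metis add.inverse_inverse diff_self)
  show "v = sol ?h N f"
  proof (intro ext)
    fix i j l
    have "w i j l = 0" by (rule uniq[OF assms(1,2) pw sw lw])
    then show "v i j l = sol ?h N f i j l" by (simp add: w_def)
  qed
qed

lemma grid_sup_set: "{\<bar>f i j k\<bar> | i j k. i \<in> {1..int N} \<and> j \<in> {1..int N} \<and> k \<in> {1..int N}}
   = (\<lambda>x. \<bar>unc f x\<bar>) ` G3 N"
proof (rule set_eqI, rule iffI)
  fix y assume "y \<in> {\<bar>f i j k\<bar> | i j k. i \<in> {1..int N} \<and> j \<in> {1..int N} \<and> k \<in> {1..int N}}"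
  then obtain i j k where "y = \<bar>f i j k\<bar>" "i \<in> {1..int N}" "j \<in> {1..int N}" "k \<in> {1..int N}" by blast
  then show "y \<in> (\<lambda>x. \<bar>unc f x\<bar>) ` G3 N"
    by (intro image_eqI[where x="(i,j,k)"]) (auto simp: G3_def GG_def)
next
  fix y assume "y \<in> (\<lambda>x. \<bar>unc f x\<bar>) ` G3 N"
  then obtain i j k where "y = \<bar>f i j k\<bar>" "i \<in> {1..int N}" "j \<in> {1..int N}" "k \<in> {1..int N}"
    by (auto simp: G3_def GG_def)
  then show "y \<in> {\<bar>f i j k\<bar> | i j k. i \<in> {1..int N} \<and> j \<in> {1..int N} \<and> k \<in> {1..int N}}" by blast
qed

lemma grid_sup_ge: "x \<in> G3 N \<Longrightarrow> \<bar>unc f x\<bar> \<le> grid_sup N f"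
  unfolding grid_sup_def grid_sup_set by (rule Max_ge) auto

lemma grid_sup_le: "N \<ge> 1 \<Longrightarrow> (\<And>x. x \<in> G3 N \<Longrightarrow> \<bar>unc f x\<bar> \<le> C) \<Longrightarrow> grid_sup N f \<le> C"
  unfolding grid_sup_def grid_sup_set
  by (subst Max_le_iff) (auto simp: G3_def GG_def)

theorem lemma3p1:
  fixes L M :: real
  assumes "L > 0" and "M > 0"
  shows "\<exists>C1 > 0. \<forall>(N::nat) (\<phi>1::grid) (\<phi>2::grid).
           N \<ge> 1 \<longrightarrow> grid_periodic N \<phi>1 \<longrightarrow> grid_periodic N \<phi>2 \<longrightarrow>
           grid_inner (L / real N) N (\<lambda>i j k. \<phi>1 i j k - \<phi>2 i j k) (\<lambda>_ _ _. 1) = 0 \<longrightarrow>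
           grid_sup N \<phi>1 < 1 \<longrightarrow> grid_sup N \<phi>2 \<le> M \<longrightarrow>
           grid_sup N (Linv (L / real N) N (\<lambda>i j k. \<phi>1 i j k - \<phi>2 i j k)) \<le> C1"
proof (intro exI[of _ "2 * L\<^sup>2 * (1 + M)"] conjI allI impI)
  show "0 < 2 * L\<^sup>2 * (1 + M)" using assms by simp
next
  fix N :: nat and \<phi>1 \<phi>2 :: grid
  assume N: "N \<ge> 1" and p1: "grid_periodic N \<phi>1" and p2: "grid_periodic N \<phi>2"
    and mz: "grid_inner (L / real N) N (\<lambda>i j k. \<phi>1 i j k - \<phi>2 i j k) (\<lambda>_ _ _. 1) = 0"
    and s1: "grid_sup N \<phi>1 < 1" and s2: "grid_sup N \<phi>2 \<le> M"
  define f where "f = (\<lambda>i j k. \<phi>1 i j k - \<phi>2 i j k)"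
  have pf: "grid_periodic N f" using p1 p2 by (simp add: grid_periodic_def f_def)
  have hpos: "(L / real N) ^ 3 \<noteq> 0" using N assms(1) by simp
  have sf: "sum (unc f) (G3 N) = 0" using mz hpos unfolding f_def[symmetric] by (simp add: grid_inner_one)
  have fb: "\<bar>unc f x\<bar> \<le> 1 + M" if "x \<in> G3 N" for x
  proof -
    have "\<bar>unc \<phi>1 x\<bar> \<le> grid_sup N \<phi>1" "\<bar>unc \<phi>2 x\<bar> \<le> grid_sup N \<phi>2"
      using grid_sup_ge[OF that] by auto
    moreover have "unc f x = unc \<phi>1 x - unc \<phi>2 x" by (cases x) (simp add: f_def)
    ultimately show ?thesis using s1 s2 by linarith
  qed
  have "grid_sup N (Linv (L / real N) N f) \<le> 2 * L\<^sup>2 * (1 + M)"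
  proof (rule grid_sup_le[OF N])
    fix x assume "x \<in> G3 N"
    obtain i j l where x: "x = (i,j,l)" by (cases x)
    show "\<bar>unc (Linv (L / real N) N f) x\<bar> \<le> 2 * L\<^sup>2 * (1 + M)"
      unfolding x unc_apply Linv_eq[OF N assms(1) pf sf]
      by (rule sol_bound[OF N assms(1) fb]) (use assms(2) in auto)
  qed
  then show "grid_sup N (Linv (L / real N) N (\<lambda>i j k. \<phi>1 i j k - \<phi>2 i j k)) \<le> 2 * L\<^sup>2 * (1 + M)"
    by (simp add: f_def)
qed

end
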